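(* Let $w=(w_0,\dots,w_l)$ with $w_0$ a positive integer, $w_1,\dots,w_l$ nonnegative integers and $w_0\ge\cdots\ge w_l$. For a graph $G$ of order at least three, $\gamma_{(w_0,\dots,w_l)}(G)=2$ if and only if one of the following holds: (i) $w_2=0$, $\gamma(G)=1$, and either $w_0=2$ or $w_0=w_1=1$; (ii) $w_0=1$, $w_1=0$ and $\gamma(G)=2$; (iii) $w_0=1$, $w_1=1$ and $\gamma_t(G)=2$; (iv) $w_0=2$, $w_1=0$ and $\gamma_2(G)=2$; (v) $w_0=2$, $w_1=1$ and $\gamma_{\times 2}(G)=2$.
   Context: All graphs are finite and simple; $N(v)$ denotes the open neighbourhood and $N[v]=N(v)\cup\{v\}$. For a vector $w=(w_0,\dots,w_l)$ of nonnegative integers with $w_0\ge1$, a function $f:V(G)\to\{0,\dots,l\}$ is a $w$-dominating function if $\sum_{u\in N(v)}f(u)\ge w_i$ for every vertex $v$ with $f(v)=i$. The weight is $\omega(f)=\sum_v f(v)$, and $\gamma_w(G)$ is the minimum weight of a $w$-dominating function on $G$. $\gamma(G)$ is the domination number and $\gamma_t(G)$ the total domination number (minimum size of $S$ with every vertex having a neighbour in $S$). $\gamma_2(G)$ is the minimum size of $S\subseteq V(G)$ such that every vertex not in $S$ has at least two neighbours in $S$. $\gamma_{\times2}(G)$ (double domination number) is the minimum size of $S\subseteq V(G)$ such that $|N[v]\cap S|\ge 2$ for every $v\in V(G)$. *)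

theory Defs
  imports Main "HOL-Library.Extended_Nat"
begin

definition simple_graph :: "'a set \<Rightarrow> ('a \<Rightarrow> 'a \<Rightarrow> bool) \<Rightarrow> bool" where
  "simple_graph V E \<longleftrightarrow> finite V \<and> (\<forall>u v. E u v \<longrightarrow> E v u) \<and> (\<forall>v. \<not> E v v)
     \<and> (\<forall>u v. E u v \<longrightarrow> u \<in> V \<and> v \<in> V)"

definition nbhd :: "'a set \<Rightarrow> ('a \<Rightarrow> 'a \<Rightarrow> bool) \<Rightarrow> 'a \<Rightarrow> 'a set" where
  "nbhd V E v = {u \<in> V. E v u}"

text \<open>w = [w_0,...,w_l] is a list of length l+1; f takes values in {0..l}.\<close>
definition w_dominating :: "'a set \<Rightarrow> ('a \<Rightarrow> 'a \<Rightarrow> bool) \<Rightarrow> nat list \<Rightarrow> ('a \<Rightarrow> nat) \<Rightarrow> bool" where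
  "w_dominating V E w f \<longleftrightarrow>
     (\<forall>v\<in>V. f v < length w \<and> (\<Sum>u\<in>nbhd V E v. f u) \<ge> w ! (f v))"

text \<open>Minimum weight; infinity if no w-dominating function exists.\<close>
definition gamma_w :: "'a set \<Rightarrow> ('a \<Rightarrow> 'a \<Rightarrow> bool) \<Rightarrow> nat list \<Rightarrow> enat" where
  "gamma_w V E w = (INF f \<in> {f. w_dominating V E w f}. enat (\<Sum>v\<in>V. f v))"

definition dom_number :: "'a set \<Rightarrow> ('a \<Rightarrow> 'a \<Rightarrow> bool) \<Rightarrow> enat" where
  "dom_number V E = (INF S \<in> {S. S \<subseteq> V \<and> (\<forall>v\<in>V. v \<in> S \<or> (\<exists>u\<in>S. E v u))}. enat (card S))"

definition total_dom_number :: "'a set \<Rightarrow> ('a \<Rightarrow> 'a \<Rightarrow> bool) \<Rightarrow> enat" where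
  "total_dom_number V E = (INF S \<in> {S. S \<subseteq> V \<and> (\<forall>v\<in>V. \<exists>u\<in>S. E v u)}. enat (card S))"

definition two_dom_number :: "'a set \<Rightarrow> ('a \<Rightarrow> 'a \<Rightarrow> bool) \<Rightarrow> enat" where
  "two_dom_number V E = (INF S \<in> {S. S \<subseteq> V \<and> (\<forall>v\<in>V - S. card (nbhd V E v \<inter> S) \<ge> 2)}. enat (card S))"

definition double_dom_number :: "'a set \<Rightarrow> ('a \<Rightarrow> 'a \<Rightarrow> bool) \<Rightarrow> enat" where
  "double_dom_number V E = (INF S \<in> {S. S \<subseteq> V \<and> (\<forall>v\<in>V. card (insert v (nbhd V E v) \<inter> S) \<ge> 2)}. enat (card S))"

end

theory Submission
  imports Defs
begin


lemma inf_enat_eq: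
  "(INF x\<in>A. enat (g x)) = enat n \<longleftrightarrow> (\<exists>x\<in>A. g x = n) \<and> (\<forall>x\<in>A. n \<le> g x)"
proof
  assume h: "(INF x\<in>A. enat (g x)) = enat n"
  show "(\<exists>x\<in>A. g x = n) \<and> (\<forall>x\<in>A. n \<le> g x)"
  proof (cases "A = {}")
    case True then show ?thesis using h by (simp add: top_enat_def)
  next
    case False
    then obtain x0 where "x0 \<in> A" by blast
    then obtain x where x: "x \<in> A" "\<forall>y. y \<in> A \<longrightarrow> g x \<le> g y"
      using ex_has_least_nat[of "\<lambda>x. x \<in> A" x0 g] by blast
    have "(INF x\<in>A. enat (g x)) = enat (g x)"
      by (rule antisym) (auto intro!: INF_lower2[OF x(1)] INF_greatest simp: x(2))
    with h x show ?thesis by auto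
  qed
next
  assume h: "(\<exists>x\<in>A. g x = n) \<and> (\<forall>x\<in>A. n \<le> g x)"
  show "(INF x\<in>A. enat (g x)) = enat n"
    using h by (intro antisym) (auto intro!: INF_greatest intro: INF_lower2)
qed

lemma inf_enat_eq1:
  "(INF x\<in>A. enat (g x)) = 1 \<longleftrightarrow> (\<exists>x\<in>A. g x = 1) \<and> (\<forall>x\<in>A. 1 \<le> g x)"
  using inf_enat_eq[of g A 1] by (simp add: one_enat_def)

lemma inf_enat_eq2:
  "(INF x\<in>A. enat (g x)) = 2 \<longleftrightarrow> (\<exists>x\<in>A. g x = 2) \<and> (\<forall>x\<in>A. 2 \<le> g x)"
  using inf_enat_eq[of g A 2] by (simp add: numeral_eq_enat)

lemma three_other:
  assumes "finite V" "card V \<ge> 3"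
  shows "\<exists>v\<in>V. v \<noteq> a \<and> v \<noteq> b"
proof (rule ccontr)
  assume "\<not> ?thesis"
  then have "V \<subseteq> {a, b}" by blast
  then have "card V \<le> card {a,b}" by (intro card_mono) auto
  also have "\<dots> \<le> 2" by (simp add: card_insert_if)
  finally show False using assms by simp
qed

lemma nbhd_sub: "simple_graph V E \<Longrightarrow> nbhd V E v \<subseteq> V" by (auto simp: nbhd_def)

lemma sum_nbhd_pair:
  assumes g: "simple_graph V E" and ab: "a \<in> V" "b \<in> V" "a \<noteq> b"
    and z: "\<forall>u\<in>V - {a,b}. f u = 0"
  shows "(\<Sum>u\<in>nbhd V E v. f u) = (if E v a then f a else 0) + (if E v b then f b else 0)"
proof -
  have fin: "finite V" using g by (simp add: simple_graph_def)
  let ?N = "nbhd V E v"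
  have finN: "finite ?N" using fin by (simp add: nbhd_def)
  have "(\<Sum>u\<in>?N. f u) = (\<Sum>u\<in>?N \<inter> {a,b}. f u)"
    by (rule sum.mono_neutral_right[OF finN]) (auto simp: nbhd_def z)
  also have "?N \<inter> {a,b} = (if E v a then {a} else {}) \<union> (if E v b then {b} else {})"
    using ab by (auto simp: nbhd_def)
  also have "(\<Sum>u\<in>\<dots>. f u) = (if E v a then f a else 0) + (if E v b then f b else 0)"
    using ab by (auto simp: add.commute)
  finally show ?thesis .
qed

lemma sum_nbhd_single:
  assumes g: "simple_graph V E" and ab: "a \<in> V"
    and z: "\<forall>u\<in>V - {a}. f u = 0"
  shows "(\<Sum>u\<in>nbhd V E v. f u) = (if E v a then f a else 0)"
proof -
  have fin: "finite V" using g by (simp add: simple_graph_def)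
  let ?N = "nbhd V E v"
  have finN: "finite ?N" using fin by (simp add: nbhd_def)
  have "(\<Sum>u\<in>?N. f u) = (\<Sum>u\<in>?N \<inter> {a}. f u)"
    by (rule sum.mono_neutral_right[OF finN]) (auto simp: nbhd_def z)
  also have "?N \<inter> {a} = (if E v a then {a} else {})"
    using ab by (auto simp: nbhd_def)
  finally show ?thesis by simp
qed

lemma sum1:
  assumes "finite V" "sum f V = (1::nat)"
  shows "\<exists>a\<in>V. f a = 1 \<and> (\<forall>v\<in>V - {a}. f v = 0)"
proof -
  obtain a where a: "a \<in> V" "f a \<noteq> 0" using assms by (metis sum.neutral zero_neq_one)
  have "sum f V = f a + sum f (V - {a})" using assms a by (simp add: sum.remove)
  then have "f a = 1" "sum f (V - {a}) = 0" using a assms by arith+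
  moreover have "finite (V - {a})" using assms by simp
  ultimately show ?thesis using a by (intro bexI[OF _ a(1)]) auto
qed

lemma sum2:
  assumes "finite V" "sum f V = (2::nat)"
  shows "(\<exists>a\<in>V. f a = 2 \<and> (\<forall>v\<in>V - {a}. f v = 0)) \<or>
         (\<exists>a\<in>V. \<exists>b\<in>V. a \<noteq> b \<and> f a = 1 \<and> f b = 1 \<and> (\<forall>v\<in>V - {a,b}. f v = 0))"
proof -
  obtain a where a: "a \<in> V" "f a \<noteq> 0" using assms by (metis sum.neutral zero_neq_numeral)
  have s: "sum f V = f a + sum f (V - {a})" using assms a by (simp add: sum.remove)
  show ?thesis
  proof (cases "f a = 2")
    case True
    then have "sum f (V - {a}) = 0" using s assms by simp
    then show ?thesis using True a assms by auto
  next
    case False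
    then have "f a = 1" "sum f (V - {a}) = 1" using s a assms by auto
    then obtain b where "b \<in> V - {a}" "f b = 1" "\<forall>v\<in>V - {a} - {b}. f v = 0"
      using sum1[of "V - {a}" f] assms by auto
    then show ?thesis using a \<open>f a = 1\<close> by (metis Diff_insert2 Diff_iff insert_commute singletonD)
  qed
qed



definition "D1 V E \<longleftrightarrow> (\<exists>a\<in>V. \<forall>v\<in>V. v \<noteq> a \<longrightarrow> E v a)"

lemma fin_sub: "simple_graph V E \<Longrightarrow> S \<subseteq> V \<Longrightarrow> finite S"
  by (auto simp: simple_graph_def intro: finite_subset)

lemma dom_set1:
  assumes "simple_graph V E"
  shows "(\<exists>S\<in>{S. S \<subseteq> V \<and> (\<forall>v\<in>V. v \<in> S \<or> (\<exists>u\<in>S. E v u))}. card S = 1) \<longleftrightarrow> D1 V E"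
proof
  assume "\<exists>S\<in>{S. S \<subseteq> V \<and> (\<forall>v\<in>V. v \<in> S \<or> (\<exists>u\<in>S. E v u))}. card S = 1"
  then obtain S where S: "S \<subseteq> V" "\<forall>v\<in>V. v \<in> S \<or> (\<exists>u\<in>S. E v u)" "card S = 1" by blast
  from S(3) obtain a where "S = {a}" by (rule card_1_singletonE)
  then show "D1 V E" using S unfolding D1_def by auto
next
  assume "D1 V E"
  then obtain a where "a \<in> V" "\<forall>v\<in>V. v \<noteq> a \<longrightarrow> E v a" unfolding D1_def by blast
  then show "\<exists>S\<in>{S. S \<subseteq> V \<and> (\<forall>v\<in>V. v \<in> S \<or> (\<exists>u\<in>S. E v u))}. card S = 1"
    by (intro bexI[of _ "{a}"]) auto
qed

lemma dom_set0:
  assumes "simple_graph V E" "V \<noteq> {}"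
  shows "\<forall>S\<in>{S. S \<subseteq> V \<and> (\<forall>v\<in>V. v \<in> S \<or> (\<exists>u\<in>S. E v u))}. 1 \<le> card S"
proof
  fix S assume S: "S \<in> {S. S \<subseteq> V \<and> (\<forall>v\<in>V. v \<in> S \<or> (\<exists>u\<in>S. E v u))}"
  then have "finite S" using fin_sub[OF assms(1)] by auto
  moreover have "S \<noteq> {}" using S assms(2) by auto
  ultimately show "1 \<le> card S" by (simp add: Suc_le_eq card_gt_0_iff)
qed

lemma dom1:
  assumes "simple_graph V E" "V \<noteq> {}"
  shows "dom_number V E = 1 \<longleftrightarrow> D1 V E"
  unfolding dom_number_def inf_enat_eq1 using dom_set1[OF assms(1)] dom_set0[OF assms] by blast

lemma dom2:
  assumes "simple_graph V E" "V \<noteq> {}"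
  shows "dom_number V E = 2 \<longleftrightarrow> \<not> D1 V E \<and>
     (\<exists>a\<in>V. \<exists>b\<in>V. a \<noteq> b \<and> (\<forall>v\<in>V. v = a \<or> v = b \<or> E v a \<or> E v b))"
  (is "_ \<longleftrightarrow> _ \<and> ?R")
proof -
  let ?A = "{S. S \<subseteq> V \<and> (\<forall>v\<in>V. v \<in> S \<or> (\<exists>u\<in>S. E v u))}"
  have "(\<forall>S\<in>?A. 2 \<le> card S) \<longleftrightarrow> \<not> D1 V E"
  proof
    assume h: "\<forall>S\<in>?A. 2 \<le> card S"
    show "\<not> D1 V E"
    proof
      assume "D1 V E"
      then obtain S where S: "S \<in> ?A" "card S = 1" using dom_set1[OF assms(1)] by blast
      have "2 \<le> card S" using h S(1) by (rule bspec)
      with S(2) show False by simp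
    qed
  next
    assume h: "\<not> D1 V E"
    show "\<forall>S\<in>?A. 2 \<le> card S"
    proof
      fix S assume S: "S \<in> ?A"
      have "1 \<le> card S" using dom_set0[OF assms] S by blast
      moreover have "card S \<noteq> 1" using h dom_set1[OF assms(1)] S by blast
      ultimately show "2 \<le> card S" by simp
    qed
  qed
  moreover have "(\<exists>S\<in>?A. card S = 2) \<longleftrightarrow> ?R"
  proof (rule iffI)
    assume "\<exists>S\<in>?A. card S = 2"
    then obtain S where S: "S \<in> ?A" "card S = 2" by blast
    then obtain a b where "S = {a,b}" "a \<noteq> b" by (meson card_2_iff)
    then have ab: "a \<noteq> b" "{a,b} \<in> ?A" using S by auto
    then show ?R by blast
  next
    assume ?R
    then obtain a b where ab: "a \<in> V" "b \<in> V" "a \<noteq> b" "\<forall>v\<in>V. v = a \<or> v = b \<or> E v a \<or> E v b" by blast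
    then have "{a,b} \<in> ?A" by auto
    then show "\<exists>S\<in>?A. card S = 2" using ab(3) by (intro bexI[of _ "{a,b}"]) auto
  qed
  ultimately show ?thesis unfolding dom_number_def inf_enat_eq2 by blast
qed

lemma tot2:
  assumes "simple_graph V E" "V \<noteq> {}"
  shows "total_dom_number V E = 2 \<longleftrightarrow>
     (\<exists>a\<in>V. \<exists>b\<in>V. E a b \<and> (\<forall>v\<in>V. E v a \<or> E v b))"
proof -
  let ?A = "{S. S \<subseteq> V \<and> (\<forall>v\<in>V. \<exists>u\<in>S. E v u)}"
  have "\<forall>S\<in>?A. 2 \<le> card S"
  proof
    fix S assume S: "S \<in> ?A"
    have "finite S" using S fin_sub[OF assms(1)] by auto
    moreover have "S \<noteq> {}" using S assms(2) by auto
    moreover have "card S \<noteq> 1"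
    proof
      assume "card S = 1"
      then obtain a where "S = {a}" by (auto simp: card_1_singleton_iff)
      then show False using S assms(1) by (auto simp: simple_graph_def)
    qed
    ultimately show "2 \<le> card S"
      by (metis One_nat_def card_0_eq less_2_cases_iff linorder_not_le)
  qed
  moreover have "(\<exists>S\<in>?A. card S = 2) \<longleftrightarrow> (\<exists>a\<in>V. \<exists>b\<in>V. E a b \<and> (\<forall>v\<in>V. E v a \<or> E v b))"
  proof (rule iffI)
    assume "\<exists>S\<in>?A. card S = 2"
    then obtain S where S: "S \<in> ?A" "card S = 2" by blast
    then obtain a b where "S = {a,b}" "a \<noteq> b" by (meson card_2_iff)
    then have ab: "a \<noteq> b" "{a,b} \<in> ?A" using S by auto
    then have abV: "a \<in> V" "b \<in> V" and all: "\<forall>v\<in>V. E v a \<or> E v b" by auto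
    have "E a a \<or> E a b" using all abV by blast
    then have "E a b" using assms(1) by (auto simp: simple_graph_def)
    then show "\<exists>a\<in>V. \<exists>b\<in>V. E a b \<and> (\<forall>v\<in>V. E v a \<or> E v b)" using abV all by blast
  next
    assume "\<exists>a\<in>V. \<exists>b\<in>V. E a b \<and> (\<forall>v\<in>V. E v a \<or> E v b)"
    then obtain a b where ab: "a \<in> V" "b \<in> V" "E a b" "\<forall>v\<in>V. E v a \<or> E v b" by blast
    have "a \<noteq> b" using ab(3) assms(1) by (auto simp: simple_graph_def)
    moreover have "{a,b} \<in> ?A" using ab by auto
    ultimately show "\<exists>S\<in>?A. card S = 2" by (intro bexI[of _ "{a,b}"]) auto
  qed
  ultimately show ?thesis unfolding total_dom_number_def inf_enat_eq2 by blast
qed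

lemma two2:
  assumes "simple_graph V E" "card V \<ge> 3"
  shows "two_dom_number V E = 2 \<longleftrightarrow>
     (\<exists>a\<in>V. \<exists>b\<in>V. a \<noteq> b \<and> (\<forall>v\<in>V. v = a \<or> v = b \<or> (E v a \<and> E v b)))"
proof -
  have fin: "finite V" using assms(1) by (simp add: simple_graph_def)
  let ?A = "{S. S \<subseteq> V \<and> (\<forall>v\<in>V - S. card (nbhd V E v \<inter> S) \<ge> 2)}"
  have "\<forall>S\<in>?A. 2 \<le> card S"
  proof
    fix S assume S: "S \<in> ?A"
    have fS: "finite S" using S fin_sub[OF assms(1)] by auto
    show "2 \<le> card S"
    proof (rule ccontr)
      assume "\<not> 2 \<le> card S"
      then have "card S \<le> 1" by simp
      obtain v where v: "v \<in> V" "v \<notin> S"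
      proof -
        have "card S < card V" using \<open>card S \<le> 1\<close> assms(2) by simp
        then show ?thesis using that S by (metis psubsetI psubset_card_mono fS subsetI order.strict_iff_not)
      qed
      then have "card (nbhd V E v \<inter> S) \<ge> 2" using S by blast
      moreover have "card (nbhd V E v \<inter> S) \<le> card S" using fS by (intro card_mono) auto
      ultimately show False using \<open>card S \<le> 1\<close> by simp
    qed
  qed
  moreover have "(\<exists>S\<in>?A. card S = 2) \<longleftrightarrow> (\<exists>a\<in>V. \<exists>b\<in>V. a \<noteq> b \<and> (\<forall>v\<in>V. v = a \<or> v = b \<or> (E v a \<and> E v b)))"
  proof (rule iffI)
    assume "\<exists>S\<in>?A. card S = 2"
    then obtain S where S: "S \<in> ?A" "card S = 2" by blast
    then obtain a b where "S = {a,b}" "a \<noteq> b" by (meson card_2_iff)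
    then have ab: "a \<noteq> b" "{a,b} \<in> ?A" using S by auto
    have "\<forall>v\<in>V. v = a \<or> v = b \<or> (E v a \<and> E v b)"
    proof (intro ballI)
      fix v assume v: "v \<in> V"
      show "v = a \<or> v = b \<or> (E v a \<and> E v b)"
      proof (cases "v = a \<or> v = b")
        case False
        then have c: "card (nbhd V E v \<inter> {a,b}) \<ge> 2" using ab v by auto
        have "nbhd V E v \<inter> {a,b} = {a,b}"
        proof (rule ccontr)
          assume "nbhd V E v \<inter> {a,b} \<noteq> {a,b}"
          then have "nbhd V E v \<inter> {a,b} \<subset> {a,b}" by blast
          then have "card (nbhd V E v \<inter> {a,b}) < card {a,b}" by (intro psubset_card_mono) auto
          then show False using c ab(1) by simp
        qed
        then show ?thesis by (auto simp: nbhd_def)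
      qed auto
    qed
    then show "\<exists>a\<in>V. \<exists>b\<in>V. a \<noteq> b \<and> (\<forall>v\<in>V. v = a \<or> v = b \<or> (E v a \<and> E v b))"
      using ab by auto
  next
    assume "\<exists>a\<in>V. \<exists>b\<in>V. a \<noteq> b \<and> (\<forall>v\<in>V. v = a \<or> v = b \<or> (E v a \<and> E v b))"
    then obtain a b where ab: "a \<in> V" "b \<in> V" "a \<noteq> b" "\<forall>v\<in>V. v = a \<or> v = b \<or> (E v a \<and> E v b)" by blast
    have "\<forall>v\<in>V - {a,b}. nbhd V E v \<inter> {a,b} = {a,b}" using ab by (auto simp: nbhd_def)
    then have "{a,b} \<in> ?A" using ab by auto
    then show "\<exists>S\<in>?A. card S = 2" using ab(3) by (intro bexI[of _ "{a,b}"]) auto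
  qed
  ultimately show ?thesis unfolding two_dom_number_def inf_enat_eq2 by blast
qed

lemma dbl2:
  assumes "simple_graph V E" "V \<noteq> {}"
  shows "double_dom_number V E = 2 \<longleftrightarrow>
     (\<exists>a\<in>V. \<exists>b\<in>V. a \<noteq> b \<and> E a b \<and> (\<forall>v\<in>V. v = a \<or> v = b \<or> (E v a \<and> E v b)))"
proof -
  have fin: "finite V" using assms(1) by (simp add: simple_graph_def)
  let ?A = "{S. S \<subseteq> V \<and> (\<forall>v\<in>V. card (insert v (nbhd V E v) \<inter> S) \<ge> 2)}"
  have "\<forall>S\<in>?A. 2 \<le> card S"
  proof
    fix S assume S: "S \<in> ?A"
    have fS: "finite S" using S fin_sub[OF assms(1)] by auto
    obtain v where "v \<in> V" using assms(2) by blast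
    then have "card (insert v (nbhd V E v) \<inter> S) \<ge> 2" using S by blast
    moreover have "card (insert v (nbhd V E v) \<inter> S) \<le> card S" using fS by (intro card_mono) auto
    ultimately show "2 \<le> card S" by simp
  qed
  moreover have "(\<exists>S\<in>?A. card S = 2) \<longleftrightarrow> (\<exists>a\<in>V. \<exists>b\<in>V. a \<noteq> b \<and> E a b \<and> (\<forall>v\<in>V. v = a \<or> v = b \<or> (E v a \<and> E v b)))"
  proof (rule iffI)
    assume "\<exists>S\<in>?A. card S = 2"
    then obtain S where S: "S \<in> ?A" "card S = 2" by blast
    then obtain a b where "S = {a,b}" "a \<noteq> b" by (meson card_2_iff)
    then have ab: "a \<noteq> b" "{a,b} \<in> ?A" using S by auto
    have key: "\<And>v. v \<in> V \<Longrightarrow> insert v (nbhd V E v) \<inter> {a,b} = {a,b}"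
    proof -
      fix v assume v: "v \<in> V"
      have c: "card (insert v (nbhd V E v) \<inter> {a,b}) \<ge> 2" using ab v by auto
      show "insert v (nbhd V E v) \<inter> {a,b} = {a,b}"
      proof (rule ccontr)
        assume "insert v (nbhd V E v) \<inter> {a,b} \<noteq> {a,b}"
        then have "insert v (nbhd V E v) \<inter> {a,b} \<subset> {a,b}" by blast
        then have "card (insert v (nbhd V E v) \<inter> {a,b}) < card {a,b}" by (intro psubset_card_mono) auto
        then show False using c ab(1) by simp
      qed
    qed
    have abV: "a \<in> V" "b \<in> V" using ab by auto
    have "E a b" using key[OF abV(1)] ab(1) by (auto simp: nbhd_def)
    moreover have "\<forall>v\<in>V. v = a \<or> v = b \<or> (E v a \<and> E v b)"
    proof
      fix v assume v: "v \<in> V"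
      have "a \<in> insert v (nbhd V E v)" "b \<in> insert v (nbhd V E v)" using key[OF v] by blast+
      then show "v = a \<or> v = b \<or> (E v a \<and> E v b)" by (auto simp: nbhd_def)
    qed
    ultimately show "\<exists>a\<in>V. \<exists>b\<in>V. a \<noteq> b \<and> E a b \<and> (\<forall>v\<in>V. v = a \<or> v = b \<or> (E v a \<and> E v b))"
      using ab abV by auto
  next
    assume "\<exists>a\<in>V. \<exists>b\<in>V. a \<noteq> b \<and> E a b \<and> (\<forall>v\<in>V. v = a \<or> v = b \<or> (E v a \<and> E v b))"
    then obtain a b where ab: "a \<in> V" "b \<in> V" "a \<noteq> b" "E a b" "\<forall>v\<in>V. v = a \<or> v = b \<or> (E v a \<and> E v b)" by blast
    have Eba: "E b a" using ab(4) assms(1) by (simp add: simple_graph_def)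
    have "\<forall>v\<in>V. insert v (nbhd V E v) \<inter> {a,b} = {a,b}" using ab Eba by (auto simp: nbhd_def)
    then have "{a,b} \<in> ?A" using ab by auto
    then show "\<exists>S\<in>?A. card S = 2" using ab(3) by (intro bexI[of _ "{a,b}"]) auto
  qed
  ultimately show ?thesis unfolding double_dom_number_def inf_enat_eq2 by blast
qed



lemma noP0:
  assumes g: "simple_graph V E" and ne: "V \<noteq> {}" and w0: "w ! 0 \<ge> 1"
    and f: "w_dominating V E w f"
  shows "sum f V \<noteq> 0"
proof
  assume s: "sum f V = 0"
  have fin: "finite V" using g by (simp add: simple_graph_def)
  then have z: "\<forall>v\<in>V. f v = 0" using s by simp
  obtain v where v: "v \<in> V" using ne by blast
  have "(\<Sum>u\<in>nbhd V E v. f u) = 0" using z nbhd_sub[OF g] by (intro sum.neutral) auto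
  moreover have "(\<Sum>u\<in>nbhd V E v. f u) \<ge> w ! (f v)" using f v by (simp add: w_dominating_def)
  ultimately show False using z v w0 by simp
qed

lemma P1:
  assumes g: "simple_graph V E" and c: "card V \<ge> 3" and w0: "w ! 0 \<ge> 1"
  shows "(\<exists>f. w_dominating V E w f \<and> sum f V = 1) \<longleftrightarrow>
         (2 \<le> length w \<and> w ! 0 = 1 \<and> w ! 1 = 0 \<and> D1 V E)"
proof (rule iffI)
  have fin: "finite V" using g by (simp add: simple_graph_def)
  have irr: "\<And>x. \<not> E x x" using g by (simp add: simple_graph_def)
  assume "\<exists>f. w_dominating V E w f \<and> sum f V = 1"
  then obtain f where f: "w_dominating V E w f" "sum f V = 1" by blast
  obtain a where a: "a \<in> V" "f a = 1" "\<forall>v\<in>V - {a}. f v = 0" using sum1[OF fin f(2)] by blast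
  have ns: "\<And>v. (\<Sum>u\<in>nbhd V E v. f u) = (if E v a then f a else 0)"
    using sum_nbhd_single[OF g a(1) a(3)] .
  have at_a: "1 < length w" "w ! 1 \<le> 0" using f(1) a ns[of a] irr unfolding w_dominating_def by force+
  have oth: "E v a \<and> w ! 0 \<le> 1" if v: "v \<in> V" "v \<noteq> a" for v
  proof -
    have "f v = 0" using a(3) v by blast
    then have "w ! 0 \<le> (if E v a then 1 else 0)" using f(1) v ns[of v] a(2) unfolding w_dominating_def by force
    then show ?thesis using w0 by (auto split: if_splits)
  qed
  obtain v where "v \<in> V" "v \<noteq> a" using three_other[OF fin c] by blast
  then have "w ! 0 = 1" using oth w0 by force
  moreover have "D1 V E" unfolding D1_def using oth a(1) by blast
  ultimately show "2 \<le> length w \<and> w ! 0 = 1 \<and> w ! 1 = 0 \<and> D1 V E" using at_a by simp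
next
  assume h: "2 \<le> length w \<and> w ! 0 = 1 \<and> w ! 1 = 0 \<and> D1 V E"
  then obtain a where a: "a \<in> V" "\<forall>v\<in>V. v \<noteq> a \<longrightarrow> E v a" unfolding D1_def by blast
  have fin: "finite V" using g by (simp add: simple_graph_def)
  define f where "f = (\<lambda>x. if x = a then 1 else (0::nat))"
  have z: "\<forall>v\<in>V - {a}. f v = 0" by (simp add: f_def)
  have "w_dominating V E w f"
    unfolding w_dominating_def
  proof
    fix v assume v: "v \<in> V"
    show "f v < length w \<and> w ! f v \<le> (\<Sum>u\<in>nbhd V E v. f u)"
      unfolding sum_nbhd_single[OF g a(1) z] using h a v by (auto simp: f_def)
  qed
  moreover have "sum f V = 1" using fin a(1) by (simp add: f_def)
  ultimately show "\<exists>f. w_dominating V E w f \<and> sum f V = 1" by blast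
qed

definition "Xp V E w \<longleftrightarrow> (\<exists>a\<in>V. \<exists>b\<in>V. a \<noteq> b \<and> w ! 1 \<le> (if E a b then 1 else 0) \<and>
   (\<forall>v\<in>V. v = a \<or> v = b \<or> w ! 0 \<le> (if E v a then 1 else 0) + (if E v b then 1 else 0)))"

lemma P2:
  assumes g: "simple_graph V E" and c: "card V \<ge> 3" and w0: "w ! 0 \<ge> 1"
  shows "(\<exists>f. w_dominating V E w f \<and> sum f V = 2) \<longleftrightarrow>
         (3 \<le> length w \<and> w ! 2 = 0 \<and> w ! 0 \<le> 2 \<and> D1 V E) \<or> (2 \<le> length w \<and> Xp V E w)"
proof (rule iffI)
  have fin: "finite V" using g by (simp add: simple_graph_def)
  have irr: "\<And>x. \<not> E x x" using g by (simp add: simple_graph_def)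
  have sym: "\<And>x y. E x y \<Longrightarrow> E y x" using g by (simp add: simple_graph_def)
  assume "\<exists>f. w_dominating V E w f \<and> sum f V = 2"
  then obtain f where f: "w_dominating V E w f" "sum f V = 2" by blast
  from sum2[OF fin f(2)]
  show "(3 \<le> length w \<and> w ! 2 = 0 \<and> w ! 0 \<le> 2 \<and> D1 V E) \<or> (2 \<le> length w \<and> Xp V E w)"
  proof
    assume "\<exists>a\<in>V. f a = 2 \<and> (\<forall>v\<in>V - {a}. f v = 0)"
    then obtain a where a: "a \<in> V" "f a = 2" "\<forall>v\<in>V - {a}. f v = 0" by blast
    have ns: "\<And>v. (\<Sum>u\<in>nbhd V E v. f u) = (if E v a then f a else 0)"
      using sum_nbhd_single[OF g a(1) a(3)] .
    have at_a: "2 < length w" "w ! 2 \<le> 0" using f(1) a ns[of a] irr unfolding w_dominating_def by force+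
    have oth: "E v a \<and> w ! 0 \<le> 2" if v: "v \<in> V" "v \<noteq> a" for v
    proof -
      have "f v = 0" using a(3) v by blast
      then have "w ! 0 \<le> (if E v a then 2 else 0)" using f(1) v ns[of v] a(2) unfolding w_dominating_def by force
      then show ?thesis using w0 by (auto split: if_splits)
    qed
    obtain v where "v \<in> V" "v \<noteq> a" using three_other[OF fin c] by blast
    then have "w ! 0 \<le> 2" using oth by blast
    moreover have "D1 V E" unfolding D1_def using oth a(1) by blast
    ultimately show ?thesis using at_a by simp
  next
    assume "\<exists>a\<in>V. \<exists>b\<in>V. a \<noteq> b \<and> f a = 1 \<and> f b = 1 \<and> (\<forall>v\<in>V - {a,b}. f v = 0)"
    then obtain a b where ab: "a \<in> V" "b \<in> V" "a \<noteq> b" "f a = 1" "f b = 1" "\<forall>v\<in>V - {a,b}. f v = 0" by blast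
    have ns: "\<And>v. (\<Sum>u\<in>nbhd V E v. f u) = (if E v a then 1 else 0) + (if E v b then 1 else 0)"
      using sum_nbhd_pair[OF g ab(1,2,3) ab(6)] ab(4,5) by simp
    have at_a: "1 < length w" "w ! 1 \<le> (if E a b then 1 else 0)"
      using f(1) ab(1,4) ns[of a] irr unfolding w_dominating_def by force+
    have oth: "w ! 0 \<le> (if E v a then 1 else 0) + (if E v b then 1 else 0)"
      if v: "v \<in> V" "v \<noteq> a" "v \<noteq> b" for v
    proof -
      have "f v = 0" using ab(6) v by blast
      then show ?thesis using f(1) v ns[of v] unfolding w_dominating_def by force
    qed
    have "Xp V E w" unfolding Xp_def using ab(1,2,3) at_a(2) oth by blast
    then show ?thesis using at_a by simp
  qed
next
  have fin: "finite V" using g by (simp add: simple_graph_def)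
  have irr: "\<And>x. \<not> E x x" using g by (simp add: simple_graph_def)
  have sym: "\<And>x y. E x y \<Longrightarrow> E y x" using g by (simp add: simple_graph_def)
  assume "(3 \<le> length w \<and> w ! 2 = 0 \<and> w ! 0 \<le> 2 \<and> D1 V E) \<or> (2 \<le> length w \<and> Xp V E w)"
  then show "\<exists>f. w_dominating V E w f \<and> sum f V = 2"
  proof
    assume h: "3 \<le> length w \<and> w ! 2 = 0 \<and> w ! 0 \<le> 2 \<and> D1 V E"
    then obtain a where a: "a \<in> V" "\<forall>v\<in>V. v \<noteq> a \<longrightarrow> E v a" unfolding D1_def by blast
    define f where "f = (\<lambda>x. if x = a then 2 else (0::nat))"
    have z: "\<forall>v\<in>V - {a}. f v = 0" by (simp add: f_def)
    have "w_dominating V E w f"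
      unfolding w_dominating_def
    proof
      fix v assume v: "v \<in> V"
      show "f v < length w \<and> w ! f v \<le> (\<Sum>u\<in>nbhd V E v. f u)"
        unfolding sum_nbhd_single[OF g a(1) z] using h a v by (auto simp: f_def)
    qed
    moreover have "sum f V = 2" using fin a(1) by (simp add: f_def)
    ultimately show ?thesis by blast
  next
    assume h: "2 \<le> length w \<and> Xp V E w"
    then obtain a b where ab: "a \<in> V" "b \<in> V" "a \<noteq> b" "w ! 1 \<le> (if E a b then 1 else 0)"
      "\<forall>v\<in>V. v = a \<or> v = b \<or> w ! 0 \<le> (if E v a then 1 else 0) + (if E v b then 1 else 0)"
      unfolding Xp_def by blast
    define f where "f = (\<lambda>x. if x = a \<or> x = b then 1 else (0::nat))"
    have z: "\<forall>v\<in>V - {a,b}. f v = 0" by (simp add: f_def)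
    have Eab: "E a b \<longleftrightarrow> E b a" using sym by blast
    have "w_dominating V E w f"
      unfolding w_dominating_def
    proof
      fix v assume v: "v \<in> V"
      show "f v < length w \<and> w ! f v \<le> (\<Sum>u\<in>nbhd V E v. f u)"
        unfolding sum_nbhd_pair[OF g ab(1,2,3) z] using h ab v irr Eab by (auto simp: f_def)
    qed
    moreover have "sum f V = 2"
    proof -
      have "sum f V = sum f {a,b}" using fin ab z by (intro sum.mono_neutral_right) auto
      then show ?thesis using ab(3) by (simp add: f_def)
    qed
    ultimately show ?thesis by blast
  qed
qed



theorem theorem12:
  fixes V :: "'a set" and E :: "'a \<Rightarrow> 'a \<Rightarrow> bool" and w :: "nat list"
  assumes "simple_graph V E"
    and "card V \<ge> 3"
    and "w \<noteq> []"
    and "w ! 0 \<ge> 1"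
    and "\<forall>i j. i \<le> j \<longrightarrow> j < length w \<longrightarrow> w ! j \<le> w ! i"
  shows "gamma_w V E w = 2 \<longleftrightarrow>
     (length w \<ge> 3 \<and> w ! 2 = 0 \<and> dom_number V E = 1 \<and> (w ! 0 = 2 \<or> (w ! 0 = 1 \<and> w ! 1 = 1))) \<or>
     (length w \<ge> 2 \<and> w ! 0 = 1 \<and> w ! 1 = 0 \<and> dom_number V E = 2) \<or>
     (length w \<ge> 2 \<and> w ! 0 = 1 \<and> w ! 1 = 1 \<and> total_dom_number V E = 2) \<or>
     (length w \<ge> 2 \<and> w ! 0 = 2 \<and> w ! 1 = 0 \<and> two_dom_number V E = 2) \<or>
     (length w \<ge> 2 \<and> w ! 0 = 2 \<and> w ! 1 = 1 \<and> double_dom_number V E = 2)"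
proof -
  note g = assms(1) and c = assms(2) and w0 = assms(4)
  have fin: "finite V" using g by (simp add: simple_graph_def)
  have ne: "V \<noteq> {}" using c by auto
  have sym: "\<And>x y. E x y \<Longrightarrow> E y x" using g by (simp add: simple_graph_def)
  have m1: "2 \<le> length w \<Longrightarrow> w ! 1 \<le> w ! 0" using assms(5) by auto
  have m2: "3 \<le> length w \<Longrightarrow> w ! 2 \<le> w ! 1" using assms(5) by auto
  let ?W = "{f. w_dominating V E w f}"
  have gw: "gamma_w V E w = 2 \<longleftrightarrow>
      (\<exists>f. w_dominating V E w f \<and> sum f V = 2) \<and> \<not> (\<exists>f. w_dominating V E w f \<and> sum f V = 1)"
  proof -
    have "(\<forall>f\<in>?W. 2 \<le> sum f V) \<longleftrightarrow> \<not> (\<exists>f. w_dominating V E w f \<and> sum f V = 1)"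
    proof (rule iffI)
      assume h: "\<forall>f\<in>?W. 2 \<le> sum f V"
      show "\<not> (\<exists>f. w_dominating V E w f \<and> sum f V = 1)"
      proof
        assume "\<exists>f. w_dominating V E w f \<and> sum f V = 1"
        then obtain f where f: "f \<in> ?W" "sum f V = 1" by blast
        have "2 \<le> sum f V" using h f(1) by (rule bspec)
        with f(2) show False by simp
      qed
    next
      assume h: "\<not> (\<exists>f. w_dominating V E w f \<and> sum f V = 1)"
      show "\<forall>f\<in>?W. 2 \<le> sum f V"
      proof
        fix f assume f: "f \<in> ?W"
        then have "sum f V \<noteq> 0" using noP0[OF g ne w0] by blast
        moreover have "sum f V \<noteq> 1" using h f by blast
        ultimately show "2 \<le> sum f V" by simp
      qed
    qed
    then show ?thesis unfolding gamma_w_def inf_enat_eq2 by blast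
  qed
  have X0: "\<not> Xp V E w" if "w ! 0 \<ge> 3"
  proof
    assume "Xp V E w"
    then obtain a b where ab: "a \<in> V" "b \<in> V"
      "\<forall>v\<in>V. v = a \<or> v = b \<or> w ! 0 \<le> (if E v a then 1 else 0) + (if E v b then 1 else 0)"
      unfolding Xp_def by blast
    obtain v where "v \<in> V" "v \<noteq> a" "v \<noteq> b" using three_other[OF fin c] by blast
    then show False using ab(3) that by (auto split: if_splits)
  qed
  have X1: "\<not> Xp V E w" if "w ! 1 \<ge> 2" using that unfolding Xp_def by (auto split: if_splits)
  have X10: "Xp V E w \<longleftrightarrow> (\<exists>a\<in>V. \<exists>b\<in>V. a \<noteq> b \<and> (\<forall>v\<in>V. v = a \<or> v = b \<or> E v a \<or> E v b))"
    if "w ! 0 = 1" "w ! 1 = 0" using that unfolding Xp_def by (auto split: if_splits)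
  have X11: "Xp V E w \<longleftrightarrow> (\<exists>a\<in>V. \<exists>b\<in>V. E a b \<and> (\<forall>v\<in>V. E v a \<or> E v b))"
    if "w ! 0 = 1" "w ! 1 = 1"
  proof
    assume "Xp V E w"
    then obtain a b where ab: "a \<in> V" "b \<in> V" "a \<noteq> b" "w ! 1 \<le> (if E a b then 1 else 0)"
      "\<forall>v\<in>V. v = a \<or> v = b \<or> w ! 0 \<le> (if E v a then 1 else 0) + (if E v b then 1 else 0)"
      unfolding Xp_def by blast
    have "E a b" using ab(4) that by (auto split: if_splits)
    moreover have "\<forall>v\<in>V. E v a \<or> E v b"
      using ab(5) that \<open>E a b\<close> sym by (auto split: if_splits)
    ultimately show "\<exists>a\<in>V. \<exists>b\<in>V. E a b \<and> (\<forall>v\<in>V. E v a \<or> E v b)" using ab by blast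
  next
    assume "\<exists>a\<in>V. \<exists>b\<in>V. E a b \<and> (\<forall>v\<in>V. E v a \<or> E v b)"
    then obtain a b where ab: "a \<in> V" "b \<in> V" "E a b" "\<forall>v\<in>V. E v a \<or> E v b" by blast
    have "a \<noteq> b" using ab(3) g by (auto simp: simple_graph_def)
    then show "Xp V E w" unfolding Xp_def using ab that by (intro bexI[OF _ ab(1)] bexI[OF _ ab(2)]) auto
  qed
  have X20: "Xp V E w \<longleftrightarrow> (\<exists>a\<in>V. \<exists>b\<in>V. a \<noteq> b \<and> (\<forall>v\<in>V. v = a \<or> v = b \<or> (E v a \<and> E v b)))"
    if "w ! 0 = 2" "w ! 1 = 0" using that unfolding Xp_def by (auto split: if_splits)
  have X21: "Xp V E w \<longleftrightarrow> (\<exists>a\<in>V. \<exists>b\<in>V. a \<noteq> b \<and> E a b \<and> (\<forall>v\<in>V. v = a \<or> v = b \<or> (E v a \<and> E v b)))"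
    if "w ! 0 = 2" "w ! 1 = 1" using that unfolding Xp_def by (auto split: if_splits)
  have w0c: "w ! 0 = 1 \<or> w ! 0 = 2 \<or> w ! 0 \<ge> 3" using w0 by linarith
  have w1c: "w ! 1 = 0 \<or> w ! 1 = 1 \<or> w ! 1 \<ge> 2" by linarith
  note U = gw P1[OF g c w0] P2[OF g c w0] dom1[OF g ne] dom2[OF g ne] tot2[OF g ne]
      two2[OF g c] dbl2[OF g ne]
  from w0c show ?thesis
  proof (elim disjE)
    assume a0: "w ! 0 = 1"
    from w1c show ?thesis
    proof (elim disjE)
      assume "w ! 1 = 0" then show ?thesis unfolding U using a0 X10 m1 m2 by auto
    next
      assume "w ! 1 = 1" then show ?thesis unfolding U using a0 X11 m1 m2 by auto
    next
      assume "w ! 1 \<ge> 2" then show ?thesis unfolding U using a0 X1 m1 m2 by auto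
    qed
  next
    assume a0: "w ! 0 = 2"
    from w1c show ?thesis
    proof (elim disjE)
      assume "w ! 1 = 0" then show ?thesis unfolding U using a0 X20 m1 m2 by auto
    next
      assume "w ! 1 = 1" then show ?thesis unfolding U using a0 X21 m1 m2 by auto
    next
      assume "w ! 1 \<ge> 2" then show ?thesis unfolding U using a0 X1 m1 m2 by auto
    qed
  next
    assume a0: "w ! 0 \<ge> 3"
    then show ?thesis unfolding U using X0 by auto
  qed
qed

end
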